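(* Let $G=HK$ for two normal subgroups $H$ and $K$ of the finite group $G$. Then for all $m\ge1$, $$\beta(m)\,\frac{d(H,K)}{|M(G,H,K)|}\le d^\wedge_m(H,K)\le\gamma(m)\,d(H,K),$$ where $\beta(m)=\min\{\alpha(m,i):i=1,\dots,k_K(H)\}$ and $\gamma(m)=\max\{\alpha(m,i):i=1,\dots,k_K(H)\}$.
   Context: All groups are finite; ${}^g x=gxg^{-1}$, $[x,y]=xyx^{-1}y^{-1}$. For normal subgroups $H,K$ of $G$, $H\wedge K$ is the group generated by symbols $h\wedge k$ ($h\in H,k\in K$) subject to $hh'\wedge k=({}^h h'\wedge {}^h k)(h\wedge k)$, $h\wedge kk'=(h\wedge k)({}^k h\wedge {}^k k')$, $y\wedge y=1$ for $y\in H\cap K$; $\kappa':H\wedge K\to[H,K]$, $h\wedge k\mapsto[h,k]$, is an epimorphism and $M(G,H,K):=\ker\kappa'$. For $m\ge1$, $d^\wedge_m(H,K)=|\{(h,k)\in H\times K:h^m\wedge k=1\}|/(|H||K|)$; $d(H,K)=|\{(h,k)\in H\times K:hk=kh\}|/(|H||K|)=k_K(H)/|H|$, with $k_K(H)$ the number of $K$-conjugacy classes in $H$. With representatives $h_1,\dots,h_{k_K(H)}$ of these classes, $\alpha(m,i)=|C_K(h_i^m)|/|C_K(h_i)|$. *)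

theory Defs
  imports "HOL-Algebra.Algebra"
begin

definition conjg :: "('a, 'b) monoid_scheme \<Rightarrow> 'a \<Rightarrow> 'a \<Rightarrow> 'a" where
  "conjg G g x = g \<otimes>\<^bsub>G\<^esub> x \<otimes>\<^bsub>G\<^esub> inv\<^bsub>G\<^esub> g"

definition commg :: "('a, 'b) monoid_scheme \<Rightarrow> 'a \<Rightarrow> 'a \<Rightarrow> 'a" where
  "commg G x y = x \<otimes>\<^bsub>G\<^esub> y \<otimes>\<^bsub>G\<^esub> inv\<^bsub>G\<^esub> x \<otimes>\<^bsub>G\<^esub> inv\<^bsub>G\<^esub> y"

text \<open>Words in the generators of the nonabelian exterior product.
  A letter (h, k, True) stands for the generator h \<and> k, a letter (h, k, False)
  for its inverse.\<close>

type_synonym 'a ext_word = "('a \<times> 'a \<times> bool) list"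

definition ext_letters :: "'a set \<Rightarrow> 'a set \<Rightarrow> ('a \<times> 'a \<times> bool) set" where
  "ext_letters H K = {(h, k, b). h \<in> H \<and> k \<in> K}"

definition ext_words :: "'a set \<Rightarrow> 'a set \<Rightarrow> 'a ext_word set" where
  "ext_words H K = {w. set w \<subseteq> ext_letters H K}"

fun letter_inv :: "'a \<times> 'a \<times> bool \<Rightarrow> 'a \<times> 'a \<times> bool" where
  "letter_inv (h, k, b) = (h, k, \<not> b)"

text \<open>The congruence on words generated by free cancellation and the defining
  relations of H \<and> K; two words are equal in H \<and> K iff they are related.\<close>

inductive ext_eq :: "('a, 'b) monoid_scheme \<Rightarrow> 'a set \<Rightarrow> 'a set \<Rightarrow> 'a ext_word \<Rightarrow> 'a ext_word \<Rightarrow> bool"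
  for G H K where
  refl: "w \<in> ext_words H K \<Longrightarrow> ext_eq G H K w w"
| sym: "ext_eq G H K u v \<Longrightarrow> ext_eq G H K v u"
| trans: "ext_eq G H K u v \<Longrightarrow> ext_eq G H K v w \<Longrightarrow> ext_eq G H K u w"
| cong: "ext_eq G H K u v \<Longrightarrow> x \<in> ext_words H K \<Longrightarrow> y \<in> ext_words H K \<Longrightarrow>
           ext_eq G H K (x @ u @ y) (x @ v @ y)"
| cancel: "l \<in> ext_letters H K \<Longrightarrow> ext_eq G H K [l, letter_inv l] []"
| rel_left: "h \<in> H \<Longrightarrow> h' \<in> H \<Longrightarrow> k \<in> K \<Longrightarrow>
           ext_eq G H K [(h \<otimes>\<^bsub>G\<^esub> h', k, True)]
                        [(conjg G h h', conjg G h k, True), (h, k, True)]"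
| rel_right: "h \<in> H \<Longrightarrow> k \<in> K \<Longrightarrow> k' \<in> K \<Longrightarrow>
           ext_eq G H K [(h, k \<otimes>\<^bsub>G\<^esub> k', True)]
                        [(h, k, True), (conjg G k h, conjg G k k', True)]"
| rel_diag: "y \<in> H \<inter> K \<Longrightarrow> ext_eq G H K [(y, y, True)] []"

definition ext_rel :: "('a, 'b) monoid_scheme \<Rightarrow> 'a set \<Rightarrow> 'a set \<Rightarrow> ('a ext_word \<times> 'a ext_word) set" where
  "ext_rel G H K = {(u, v). ext_eq G H K u v}"

text \<open>Elements of H \<and> K: equivalence classes of words.\<close>

definition ext_prod :: "('a, 'b) monoid_scheme \<Rightarrow> 'a set \<Rightarrow> 'a set \<Rightarrow> 'a ext_word set set" where
  "ext_prod G H K = ext_words H K // ext_rel G H K"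

text \<open>Evaluation of a word under \<kappa>': h \<and> k \<mapsto> [h,k].\<close>

definition ext_eval :: "('a, 'b) monoid_scheme \<Rightarrow> 'a ext_word \<Rightarrow> 'a" where
  "ext_eval G w = foldr (\<lambda>(h, k, b) acc.
      (if b then commg G h k else inv\<^bsub>G\<^esub> (commg G h k)) \<otimes>\<^bsub>G\<^esub> acc) w \<one>\<^bsub>G\<^esub>"

definition ext_M :: "('a, 'b) monoid_scheme \<Rightarrow> 'a set \<Rightarrow> 'a set \<Rightarrow> 'a ext_word set set" where
  "ext_M G H K = {C \<in> ext_prod G H K. \<forall>w \<in> C. ext_eval G w = \<one>\<^bsub>G\<^esub>}"

definition ext_trivial :: "('a, 'b) monoid_scheme \<Rightarrow> 'a set \<Rightarrow> 'a set \<Rightarrow> 'a \<Rightarrow> 'a \<Rightarrow> bool" where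
  "ext_trivial G H K h k \<longleftrightarrow> ext_eq G H K [(h, k, True)] []"

definition d_ext :: "('a, 'b) monoid_scheme \<Rightarrow> nat \<Rightarrow> 'a set \<Rightarrow> 'a set \<Rightarrow> real" where
  "d_ext G m H K = real (card {(h, k). h \<in> H \<and> k \<in> K \<and> ext_trivial G H K (h [^]\<^bsub>G\<^esub> m) k})
                   / (real (card H) * real (card K))"

definition d_comm :: "('a, 'b) monoid_scheme \<Rightarrow> 'a set \<Rightarrow> 'a set \<Rightarrow> real" where
  "d_comm G H K = real (card {(h, k). h \<in> H \<and> k \<in> K \<and> h \<otimes>\<^bsub>G\<^esub> k = k \<otimes>\<^bsub>G\<^esub> h})
                   / (real (card H) * real (card K))"

definition centralizer_in :: "('a, 'b) monoid_scheme \<Rightarrow> 'a set \<Rightarrow> 'a \<Rightarrow> 'a set" where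
  "centralizer_in G K x = {k \<in> K. k \<otimes>\<^bsub>G\<^esub> x = x \<otimes>\<^bsub>G\<^esub> k}"

definition alpha :: "('a, 'b) monoid_scheme \<Rightarrow> 'a set \<Rightarrow> nat \<Rightarrow> 'a \<Rightarrow> real" where
  "alpha G K m h = real (card (centralizer_in G K (h [^]\<^bsub>G\<^esub> m))) / real (card (centralizer_in G K h))"

definition K_classes :: "('a, 'b) monoid_scheme \<Rightarrow> 'a set \<Rightarrow> 'a set \<Rightarrow> 'a set set" where
  "K_classes G H K = (\<lambda>h. {conjg G k h | k. k \<in> K}) ` H"

end

theory Submission
  imports Defs
begin

context group begin

lemma canc1 [simp]: "x \<in> carrier G \<Longrightarrow> y \<in> carrier G \<Longrightarrow> x \<otimes> (inv x \<otimes> y) = y"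
  by (simp add: m_assoc[symmetric])
lemma canc2 [simp]: "x \<in> carrier G \<Longrightarrow> y \<in> carrier G \<Longrightarrow> inv x \<otimes> (x \<otimes> y) = y"
  by (simp add: m_assoc[symmetric])


lemma ext_eval_Nil [simp]: "ext_eval G [] = \<one>"
  by (simp add: ext_eval_def)
lemma ext_eval_Cons [simp]: "ext_eval G ((h,k,b)#w) = (if b then commg G h k else inv (commg G h k)) \<otimes> ext_eval G w"
  by (simp add: ext_eval_def)

lemma eval_foldr:
  assumes "set w \<subseteq> carrier G \<times> carrier G \<times> UNIV" "a \<in> carrier G"
  shows "foldr (\<lambda>(h, k, b) acc.
      (if b then commg G h k else inv (commg G h k)) \<otimes> acc) w a = ext_eval G w \<otimes> a
    \<and> ext_eval G w \<in> carrier G"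
  using assms
proof (induction w arbitrary: a)
  case Nil
  then show ?case by simp
next
  case (Cons l w)
  obtain h k b where l: "l = (h,k,b)" by (cases l) auto
  have hk: "h \<in> carrier G" "k \<in> carrier G" using Cons.prems l by auto
  have c: "commg G h k \<in> carrier G" using hk by (simp add: commg_def)
  have IH: "foldr (\<lambda>(h, k, b) acc. (if b then commg G h k else inv (commg G h k)) \<otimes> acc) w a = ext_eval G w \<otimes> a"
     "ext_eval G w \<in> carrier G" using Cons by auto
  show ?case using IH c Cons.prems
    by (simp add: l m_assoc)
qed

lemma eval_append:
  assumes "set u \<subseteq> carrier G \<times> carrier G \<times> UNIV" "set v \<subseteq> carrier G \<times> carrier G \<times> UNIV"
  shows "ext_eval G (u @ v) = ext_eval G u \<otimes> ext_eval G v"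
proof -
  have "ext_eval G (u @ v) = foldr (\<lambda>(h, k, b) acc.
      (if b then commg G h k else inv (commg G h k)) \<otimes> acc) u (ext_eval G v)"
    unfolding ext_eval_def by simp
  also have "\<dots> = ext_eval G u \<otimes> ext_eval G v"
    using eval_foldr[OF assms(1)] eval_foldr[OF assms(2), of \<one>] by simp
  finally show ?thesis .
qed

lemma comm_left:
  assumes "h \<in> carrier G" "h' \<in> carrier G" "k \<in> carrier G"
  shows "commg G (h \<otimes> h') k = commg G (conjg G h h') (conjg G h k) \<otimes> commg G h k"
  using assms by (simp add: commg_def conjg_def m_assoc inv_mult_group)

lemma comm_right:
  assumes "h \<in> carrier G" "k' \<in> carrier G" "k \<in> carrier G"
  shows "commg G h (k \<otimes> k') = commg G h k \<otimes> commg G (conjg G k h) (conjg G k k')"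
  using assms by (simp add: commg_def conjg_def m_assoc inv_mult_group)


lemma commg_closed [simp]: "h \<in> carrier G \<Longrightarrow> k \<in> carrier G \<Longrightarrow> commg G h k \<in> carrier G"
  by (simp add: commg_def)
lemma conjg_closed [simp]: "h \<in> carrier G \<Longrightarrow> k \<in> carrier G \<Longrightarrow> conjg G h k \<in> carrier G"
  by (simp add: conjg_def)

lemma words_carrier:
  assumes "H \<subseteq> carrier G" "K \<subseteq> carrier G" "w \<in> ext_words H K"
  shows "set w \<subseteq> carrier G \<times> carrier G \<times> UNIV"
  using assms by (auto simp: ext_words_def ext_letters_def)

lemma ext_eq_eval:
  assumes HN: "H \<lhd> G" and KN: "K \<lhd> G" and e: "ext_eq G H K u v"
  shows "u \<in> ext_words H K \<and> v \<in> ext_words H K \<and> ext_eval G u = ext_eval G v"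
  using e
proof (induction rule: ext_eq.induct)
  case (refl w)
  then show ?case by simp
next
  case (sym u v)
  then show ?case by simp
next
  case (trans u v w)
  then show ?case by simp
next
  case (cong u v x y)
  have sH: "H \<subseteq> carrier G" "K \<subseteq> carrier G"
    using HN KN by (auto dest: normal_imp_subgroup subgroup.subset)
  have w: "x @ u @ y \<in> ext_words H K" "x @ v @ y \<in> ext_words H K"
    using cong by (auto simp: ext_words_def)
  have cu: "set u \<subseteq> carrier G \<times> carrier G \<times> UNIV" "set v \<subseteq> carrier G \<times> carrier G \<times> UNIV"
     "set x \<subseteq> carrier G \<times> carrier G \<times> UNIV" "set y \<subseteq> carrier G \<times> carrier G \<times> UNIV"
    using words_carrier[OF sH] cong by auto
  have "ext_eval G (x @ u @ y) = ext_eval G x \<otimes> (ext_eval G u \<otimes> ext_eval G y)"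
    using eval_append cu by simp
  moreover have "ext_eval G (x @ v @ y) = ext_eval G x \<otimes> (ext_eval G v \<otimes> ext_eval G y)"
    using eval_append cu by simp
  ultimately show ?case using w cong by simp
next
  case (cancel l)
  obtain h k b where l: "l = (h,k,b)" by (cases l) auto
  have sH: "H \<subseteq> carrier G" "K \<subseteq> carrier G"
    using HN KN by (auto dest: normal_imp_subgroup subgroup.subset)
  have hk: "h \<in> carrier G" "k \<in> carrier G" using cancel sH l by (auto simp: ext_letters_def)
  then have c: "commg G h k \<in> carrier G" by simp
  have "ext_eval G [l, letter_inv l] = \<one>"
    using c by (cases b) (simp_all add: l)
  moreover have "[l, letter_inv l] \<in> ext_words H K"
    using cancel l by (cases b) (auto simp: ext_words_def ext_letters_def)
  ultimately show ?case by (simp add: ext_words_def)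
next
  case (rel_left h h' k)
  have sH: "H \<subseteq> carrier G" "K \<subseteq> carrier G"
    using HN KN by (auto dest: normal_imp_subgroup subgroup.subset)
  have in1: "h \<otimes> h' \<in> H" using rel_left HN
    by (meson normal_imp_subgroup subgroup.m_closed)
  have in2: "conjg G h h' \<in> H" "conjg G h k \<in> K"
    using rel_left HN KN sH unfolding conjg_def by (auto intro: normal.inv_op_closed2)
  have hk: "h \<in> carrier G" "h' \<in> carrier G" "k \<in> carrier G" using rel_left sH by auto
  have "ext_eval G [(h \<otimes> h', k, True)] = commg G (h \<otimes> h') k"
    using hk by (simp add:)
  moreover have "ext_eval G [(conjg G h h', conjg G h k, True), (h, k, True)] = commg G (conjg G h h') (conjg G h k) \<otimes> commg G h k"
    using hk by (simp add:)
  moreover have "[(h \<otimes> h', k, True)] \<in> ext_words H K" "[(conjg G h h', conjg G h k, True), (h, k, True)] \<in> ext_words H K"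
    using in1 in2 rel_left by (auto simp: ext_words_def ext_letters_def)
  ultimately show ?case using comm_left[OF hk] by simp
next
  case (rel_right h k k')
  have sH: "H \<subseteq> carrier G" "K \<subseteq> carrier G"
    using HN KN by (auto dest: normal_imp_subgroup subgroup.subset)
  have in1: "k \<otimes> k' \<in> K" using rel_right KN
    by (meson normal_imp_subgroup subgroup.m_closed)
  have in2: "conjg G k h \<in> H" "conjg G k k' \<in> K"
    using rel_right HN KN sH unfolding conjg_def by (auto intro: normal.inv_op_closed2)
  have hk: "h \<in> carrier G" "k' \<in> carrier G" "k \<in> carrier G" using rel_right sH by auto
  have "ext_eval G [(h, k \<otimes> k', True)] = commg G h (k \<otimes> k')"
    using hk by (simp add:)
  moreover have "ext_eval G [(h, k, True), (conjg G k h, conjg G k k', True)] = commg G h k \<otimes> commg G (conjg G k h) (conjg G k k')"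
    using hk by (simp add:)
  moreover have "[(h, k \<otimes> k', True)] \<in> ext_words H K" "[(h, k, True), (conjg G k h, conjg G k k', True)] \<in> ext_words H K"
    using in1 in2 rel_right by (auto simp: ext_words_def ext_letters_def)
  ultimately show ?case using comm_right[OF hk] by simp
next
  case (rel_diag y)
  have sH: "H \<subseteq> carrier G" 
    using HN by (auto dest: normal_imp_subgroup subgroup.subset)
  then have y: "y \<in> carrier G" using rel_diag by auto
  have "commg G y y = \<one>" using y by (simp add: commg_def m_assoc)
  moreover have "ext_eval G [(y, y, True)] = commg G y y"
    using y by (simp add:)
  moreover have "[(y, y, True)] \<in> ext_words H K" "[] \<in> ext_words H K"
    using rel_diag by (auto simp: ext_words_def ext_letters_def)
  ultimately show ?case by (simp add:)
qed


lemma commg_one_imp: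
  assumes "a \<in> carrier G" "b \<in> carrier G" "commg G a b = \<one>"
  shows "a \<otimes> b = b \<otimes> a"
proof -
  have "commg G a b \<otimes> (b \<otimes> a) = a \<otimes> b"
    using assms(1,2) by (simp add: commg_def m_assoc)
  then show ?thesis using assms by simp
qed

lemma commute_imp_commg:
  assumes "a \<in> carrier G" "b \<in> carrier G" "a \<otimes> b = b \<otimes> a"
  shows "commg G a b = \<one>"
proof -
  have "commg G a b = b \<otimes> a \<otimes> inv a \<otimes> inv b"
    using assms by (simp add: commg_def)
  then show ?thesis using assms by (simp add: m_assoc)
qed

lemma word1: "x \<in> H \<Longrightarrow> k \<in> K \<Longrightarrow> [(x,k,b)] \<in> ext_words H K"
  by (simp add: ext_words_def ext_letters_def)

lemma triv_sub:
  assumes HN: "H \<lhd> G" and KN: "K \<lhd> G" and x: "x \<in> H"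
  shows "{k \<in> K. ext_trivial G H K x k} \<subseteq> centralizer_in G K x"
proof
  fix k assume k: "k \<in> {k \<in> K. ext_trivial G H K x k}"
  have sH: "H \<subseteq> carrier G" "K \<subseteq> carrier G"
    using HN KN by (auto dest: normal_imp_subgroup subgroup.subset)
  have kc: "k \<in> carrier G" "x \<in> carrier G" using k sH x by auto
  have "ext_eval G [(x,k,True)] = ext_eval G []"
    using ext_eq_eval[OF HN KN] k unfolding ext_trivial_def by blast
  then have "commg G x k = \<one>" using kc by simp
  then have "x \<otimes> k = k \<otimes> x" using commg_one_imp kc by blast
  then show "k \<in> centralizer_in G K x" using k by (simp add: centralizer_in_def)
qed

lemma key:
  assumes HN: "H \<lhd> G" and KN: "K \<lhd> G" and x: "x \<in> H"
    and fin: "finite (carrier G)" and finM: "finite (ext_M G H K)"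
  shows "card (centralizer_in G K x) \<le> card (ext_M G H K) * card {k \<in> K. ext_trivial G H K x k}"
proof -
  define C where "C = centralizer_in G K x"
  define S where "S = {k \<in> K. ext_trivial G H K x k}"
  define M where "M = ext_M G H K"
  define \<phi> where "\<phi> k = ext_rel G H K `` {[(x,k,True)]}" for k
  have sH: "H \<subseteq> carrier G" "K \<subseteq> carrier G"
    using HN KN by (auto dest: normal_imp_subgroup subgroup.subset)
  have subK: "subgroup K G" using KN normal_imp_subgroup by blast
  have xc: "x \<in> carrier G" using x sH by auto
  have finK: "finite K" using fin sH finite_subset by blast
  have finC: "finite C" unfolding C_def centralizer_in_def using finK by simp
  have finS: "finite S" unfolding S_def using finK by simp
  have CK: "C \<subseteq> K" unfolding C_def centralizer_in_def by auto
  have img: "\<phi> ` C \<subseteq> M"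
  proof
    fix c assume "c \<in> \<phi> ` C"
    then obtain k where k: "k \<in> C" "c = \<phi> k" by auto
    have kK: "k \<in> K" "k \<in> carrier G" using k CK sH by auto
    have comm: "k \<otimes> x = x \<otimes> k" using k unfolding C_def centralizer_in_def by auto
    have w: "[(x,k,True)] \<in> ext_words H K" using x kK(1) by (rule word1)
    have "c \<in> ext_prod G H K" unfolding ext_prod_def k(2) \<phi>_def
      using w by (rule quotientI)
    moreover have "\<forall>w \<in> c. ext_eval G w = \<one>"
    proof
      fix w assume "w \<in> c"
      then have "ext_eq G H K [(x,k,True)] w" using k(2) by (simp add: \<phi>_def ext_rel_def)
      then have "ext_eval G w = ext_eval G [(x,k,True)]" using ext_eq_eval[OF HN KN] by metis
      also have "\<dots> = commg G x k" using xc kK by simp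
      also have "\<dots> = \<one>" using commute_imp_commg xc kK comm by metis
      finally show "ext_eval G w = \<one>" .
    qed
    ultimately show "c \<in> M" unfolding M_def ext_M_def by simp
  qed
  have fib: "{k \<in> C. \<phi> k = \<phi> k0} \<subseteq> (\<lambda>s. s \<otimes> k0) ` S" if k0: "k0 \<in> C" for k0
  proof
    fix k assume kin: "k \<in> {k \<in> C. \<phi> k = \<phi> k0}"
    have kK: "k \<in> K" "k \<in> carrier G" "k0 \<in> K" "k0 \<in> carrier G" using kin k0 CK sH by auto
    have comm: "k0 \<otimes> x = x \<otimes> k0" using k0 unfolding C_def centralizer_in_def by auto
    have w: "[(x,k,True)] \<in> ext_words H K" using x kK(1) by (rule word1)
    have "[(x,k,True)] \<in> \<phi> k" unfolding \<phi>_def ext_rel_def using ext_eq.refl[OF w] by simp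
    then have "[(x,k,True)] \<in> \<phi> k0" using kin by simp
    then have e: "ext_eq G H K [(x,k0,True)] [(x,k,True)]" by (simp add: \<phi>_def ext_rel_def)
    define s where "s = k \<otimes> inv k0"
    have sK: "s \<in> K" unfolding s_def using kK subK by (simp add: subgroup.m_closed subgroup.m_inv_closed)
    have ik: "inv k0 \<otimes> k \<in> K" using kK subK by (simp add: subgroup.m_closed subgroup.m_inv_closed)
    have r1: "ext_eq G H K [(x, k0 \<otimes> (inv k0 \<otimes> k), True)]
        [(x, k0, True), (conjg G k0 x, conjg G k0 (inv k0 \<otimes> k), True)]"
      using ext_eq.rel_right[OF x kK(3) ik] .
    have q1: "k0 \<otimes> (inv k0 \<otimes> k) = k" using kK by simp
    have q2: "conjg G k0 x = x" unfolding conjg_def using comm kK xc by (simp add: m_assoc)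
    have q3: "conjg G k0 (inv k0 \<otimes> k) = s" unfolding conjg_def s_def using kK by (simp add: m_assoc)
    have r1': "ext_eq G H K [(x,k,True)] [(x,k0,True),(x,s,True)]" using r1 q1 q2 q3 by simp
    have r2: "ext_eq G H K [(x,k0,True)] [(x,k0,True),(x,s,True)]" using ext_eq.trans[OF e r1'] .
    have wf: "[(x,k0,False)] \<in> ext_words H K" "[(x,s,True)] \<in> ext_words H K" "[] \<in> ext_words H K"
      using word1 x kK sK by (auto simp: ext_words_def)
    have r3: "ext_eq G H K ([(x,k0,False)] @ [(x,k0,True)] @ []) ([(x,k0,False)] @ [(x,k0,True),(x,s,True)] @ [])"
      using ext_eq.cong[OF r2 wf(1) wf(3)] .
    have r4: "ext_eq G H K [(x,k0,False),(x,k0,True)] []"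
      using ext_eq.cancel[of "(x,k0,False)" H K G] x kK by (simp add: ext_letters_def)
    have r5: "ext_eq G H K ([] @ [(x,k0,False),(x,k0,True)] @ [(x,s,True)]) ([] @ [] @ [(x,s,True)])"
      using ext_eq.cong[OF r4 wf(3) wf(2)] .
    have "ext_eq G H K [] [(x,s,True)]"
      using ext_eq.trans[OF ext_eq.trans[OF ext_eq.sym[OF r4] r3[simplified]] r5[simplified]] .
    then have "ext_trivial G H K x s" unfolding ext_trivial_def by (rule ext_eq.sym)
    then have "s \<in> S" unfolding S_def using sK by simp
    moreover have "k = s \<otimes> k0" unfolding s_def using kK by (simp add: m_assoc)
    ultimately show "k \<in> (\<lambda>s. s \<otimes> k0) ` S" by blast
  qed
  have "C = (\<Union>c\<in>\<phi> ` C. {k \<in> C. \<phi> k = c})" by auto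
  then have "card C \<le> (\<Sum>c\<in>\<phi> ` C. card {k \<in> C. \<phi> k = c})"
    using card_UN_le[of "\<phi> ` C" "\<lambda>c. {k \<in> C. \<phi> k = c}"] finC by simp
  also have "\<dots> \<le> (\<Sum>c\<in>\<phi> ` C. card S)"
  proof (rule sum_mono)
    fix c assume "c \<in> \<phi> ` C"
    then obtain k0 where k0: "k0 \<in> C" "c = \<phi> k0" by auto
    have "card {k \<in> C. \<phi> k = c} \<le> card ((\<lambda>s. s \<otimes> k0) ` S)"
      using fib[OF k0(1)] k0(2) finS by (simp add: card_mono)
    also have "\<dots> \<le> card S" by (rule card_image_le[OF finS])
    finally show "card {k \<in> C. \<phi> k = c} \<le> card S" .
  qed
  also have "\<dots> = card (\<phi> ` C) * card S" by simp
  also have "\<dots> \<le> card M * card S"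
    using card_mono[OF _ img] finM M_def by simp
  finally show ?thesis unfolding C_def M_def S_def .
qed

lemma pow_in_sub: "subgroup H G \<Longrightarrow> h \<in> H \<Longrightarrow> h [^] (n::nat) \<in> H"
  by (induction n) (auto simp: subgroup.one_closed subgroup.m_closed nat_pow_Suc)

lemma conjg_mult: "g \<in> carrier G \<Longrightarrow> a \<in> carrier G \<Longrightarrow> b \<in> carrier G \<Longrightarrow>
   conjg G g a \<otimes> conjg G g b = conjg G g (a \<otimes> b)"
  by (simp add: conjg_def m_assoc)

lemma conjg_pow: "g \<in> carrier G \<Longrightarrow> a \<in> carrier G \<Longrightarrow> conjg G g (a [^] (n::nat)) = (conjg G g a) [^] n"
proof (induction n)
  case 0
  then show ?case by (simp add: conjg_def)
next
  case (Suc n)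
  then show ?case by (simp add: conjg_mult[symmetric])
qed

lemma conjg_inv_conjg: "g \<in> carrier G \<Longrightarrow> a \<in> carrier G \<Longrightarrow> conjg G (inv g) (conjg G g a) = a"
  by (simp add: conjg_def m_assoc)

lemma cent_le:
  assumes KN: "K \<lhd> G" and fin: "finite K" and g: "g \<in> carrier G" and x: "x \<in> carrier G"
  shows "card (centralizer_in G K x) \<le> card (centralizer_in G K (conjg G g x))"
proof (rule card_inj_on_le[where f = "conjg G g"])
  have sK: "K \<subseteq> carrier G" using KN by (auto dest: normal_imp_subgroup subgroup.subset)
  show "inj_on (conjg G g) (centralizer_in G K x)"
  proof (rule inj_onI)
    fix a b assume a: "a \<in> centralizer_in G K x" and b: "b \<in> centralizer_in G K x"
      and e: "conjg G g a = conjg G g b"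
    have "a \<in> carrier G" "b \<in> carrier G" using a b sK unfolding centralizer_in_def by auto
    then show "a = b" using e conjg_inv_conjg g by metis
  qed
  show "conjg G g ` centralizer_in G K x \<subseteq> centralizer_in G K (conjg G g x)"
  proof
    fix y assume "y \<in> conjg G g ` centralizer_in G K x"
    then obtain k where k: "k \<in> K" "k \<otimes> x = x \<otimes> k" "y = conjg G g k"
      unfolding centralizer_in_def by auto
    have kc: "k \<in> carrier G" using k sK by auto
    have "y \<in> K" using k g KN unfolding conjg_def by (simp add: normal.inv_op_closed2)
    moreover have "y \<otimes> conjg G g x = conjg G g x \<otimes> y"
      using k kc g x by (simp add: conjg_mult)
    ultimately show "y \<in> centralizer_in G K (conjg G g x)" by (simp add: centralizer_in_def)
  qed
  show "finite (centralizer_in G K (conjg G g x))" using fin unfolding centralizer_in_def by simp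
qed

lemma alpha_conjg:
  assumes KN: "K \<lhd> G" and fin: "finite K" and g: "g \<in> carrier G" and x: "x \<in> carrier G"
  shows "alpha G K m (conjg G g x) = alpha G K m x"
proof -
  have ceq: "card (centralizer_in G K (conjg G g y)) = card (centralizer_in G K y)" if y: "y \<in> carrier G" for y
  proof -
    have "card (centralizer_in G K (conjg G g y)) \<le> card (centralizer_in G K (conjg G (inv g) (conjg G g y)))"
      using cent_le[OF KN fin, of "inv g" "conjg G g y"] g y by simp
    also have "\<dots> = card (centralizer_in G K y)" using conjg_inv_conjg g y by simp
    finally show ?thesis using cent_le[OF KN fin g y] by simp
  qed
  show ?thesis unfolding alpha_def
    using ceq[of x] ceq[of "x [^] m"] conjg_pow[of g x m] g x by simp
qed
end


theorem mainTheorem7: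
  fixes G :: "('a, 'b) monoid_scheme" and H K :: "'a set" and m :: nat
    and rep :: "'a set \<Rightarrow> 'a"
  assumes "group G" and "finite (carrier G)"
    and "H \<lhd> G" and "K \<lhd> G"
    and "H <#>\<^bsub>G\<^esub> K = carrier G"
    and "m \<ge> 1"
    and "\<And>C. C \<in> K_classes G H K \<Longrightarrow> rep C \<in> C"
  shows "Min ((\<lambda>C. alpha G K m (rep C)) ` K_classes G H K) * d_comm G H K
           / real (card (ext_M G H K)) \<le> d_ext G m H K
       \<and> d_ext G m H K \<le> Max ((\<lambda>C. alpha G K m (rep C)) ` K_classes G H K) * d_comm G H K"
proof -
  interpret group G by (rule assms(1))
  have HN: "H \<lhd> G" and KN: "K \<lhd> G" using assms by auto
  have sH: "H \<subseteq> carrier G" "K \<subseteq> carrier G"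
    using HN KN by (auto dest: normal_imp_subgroup subgroup.subset)
  have subH: "subgroup H G" "subgroup K G" using HN KN normal_imp_subgroup by blast+
  have finH: "finite H" "finite K" using assms(2) sH finite_subset by blast+
  have oneH: "\<one>\<^bsub>G\<^esub> \<in> H" "\<one>\<^bsub>G\<^esub> \<in> K" using subH subgroup.one_closed by blast+
  define A where "A = (\<lambda>C. alpha G K m (rep C)) ` K_classes G H K"
  define c where "c h = card (centralizer_in G K h)" for h
  define e where "e h = card (centralizer_in G K (h [^]\<^bsub>G\<^esub> m))" for h
  define N where "N h = card {k \<in> K. ext_trivial G H K (h [^]\<^bsub>G\<^esub> m) k}" for h
  define Mc where "Mc = card (ext_M G H K)"
  have finA: "finite A" unfolding A_def K_classes_def using finH by simp
  have hpow: "h [^]\<^bsub>G\<^esub> m \<in> H" if "h \<in> H" for h using that subH(1) pow_in_sub by blast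
  have cpos: "c h > 0" if "h \<in> H" for h
  proof -
    have "\<one>\<^bsub>G\<^esub> \<in> centralizer_in G K h" using oneH that sH by (auto simp: centralizer_in_def)
    moreover have "finite (centralizer_in G K h)" using finH unfolding centralizer_in_def by simp
    ultimately show ?thesis unfolding c_def by (auto simp: card_gt_0_iff)
  qed
  have alph: "alpha G K m h \<in> A" if h: "h \<in> H" for h
  proof -
    define Cl where "Cl = {conjg G k h | k. k \<in> K}"
    have Cl: "Cl \<in> K_classes G H K" unfolding Cl_def K_classes_def using h by blast
    then have "rep Cl \<in> Cl" using assms(7) by blast
    then obtain k where k: "k \<in> K" "rep Cl = conjg G k h" unfolding Cl_def by auto
    have "alpha G K m (rep Cl) = alpha G K m h"
      using alpha_conjg[OF KN finH(2), of k h m] k sH h by auto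
    then show ?thesis unfolding A_def using Cl by (metis image_eqI)
  qed
  have aeq: "real (e h) = alpha G K m h * real (c h)" if "h \<in> H" for h
    using cpos[OF that] unfolding alpha_def e_def c_def by simp
  have NleE: "N h \<le> e h" if "h \<in> H" for h
  proof -
    have "{k \<in> K. ext_trivial G H K (h [^]\<^bsub>G\<^esub> m) k} \<subseteq> centralizer_in G K (h [^]\<^bsub>G\<^esub> m)"
      using triv_sub[OF HN KN hpow[OF that]] .
    moreover have "finite (centralizer_in G K (h [^]\<^bsub>G\<^esub> m))" using finH unfolding centralizer_in_def by simp
    ultimately show ?thesis unfolding N_def e_def by (rule card_mono[rotated])
  qed
  have set1: "{(h, k). h \<in> H \<and> k \<in> K \<and> ext_trivial G H K (h [^]\<^bsub>G\<^esub> m) k}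
      = Sigma H (\<lambda>h. {k \<in> K. ext_trivial G H K (h [^]\<^bsub>G\<^esub> m) k})" by auto
  have set2: "{(h, k). h \<in> H \<and> k \<in> K \<and> h \<otimes>\<^bsub>G\<^esub> k = k \<otimes>\<^bsub>G\<^esub> h} = Sigma H (\<lambda>h. centralizer_in G K h)"
    by (auto simp: centralizer_in_def)
  have dext: "d_ext G m H K = (\<Sum>h\<in>H. real (N h)) / (real (card H) * real (card K))"
    unfolding d_ext_def set1 N_def using finH by (simp add: of_nat_sum)
  have dcomm: "d_comm G H K = (\<Sum>h\<in>H. real (c h)) / (real (card H) * real (card K))"
    unfolding d_comm_def set2 c_def using finH by (simp add: centralizer_in_def of_nat_sum)
  have "card H > 0" "card K > 0" using finH oneH by (auto simp: card_gt_0_iff)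
  then have Dpos: "real (card H) * real (card K) > 0" by simp
  define D where "D = real (card H) * real (card K)"
  have upper: "(\<Sum>h\<in>H. real (N h)) \<le> Max A * (\<Sum>h\<in>H. real (c h))"
  proof -
    have "(\<Sum>h\<in>H. real (N h)) \<le> (\<Sum>h\<in>H. Max A * real (c h))"
    proof (rule sum_mono)
      fix h assume h: "h \<in> H"
      have "real (N h) \<le> real (e h)" using NleE[OF h] by simp
      also have "\<dots> = alpha G K m h * real (c h)" using aeq[OF h] .
      also have "\<dots> \<le> Max A * real (c h)"
        using Max_ge[OF finA alph[OF h]] by (simp add: mult_right_mono)
      finally show "real (N h) \<le> Max A * real (c h)" .
    qed
    then show ?thesis by (simp add: sum_distrib_left)
  qed
  have lower: "Min A * (\<Sum>h\<in>H. real (c h)) \<le> real Mc * (\<Sum>h\<in>H. real (N h))" if Mpos: "Mc > 0"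
  proof -
    have finM: "finite (ext_M G H K)" using Mpos unfolding Mc_def by (simp add: card_gt_0_iff)
    have "(\<Sum>h\<in>H. Min A * real (c h)) \<le> (\<Sum>h\<in>H. real Mc * real (N h))"
    proof (rule sum_mono)
      fix h assume h: "h \<in> H"
      have "Min A * real (c h) \<le> alpha G K m h * real (c h)"
        using Min_le[OF finA alph[OF h]] by (simp add: mult_right_mono)
      also have "\<dots> = real (e h)" using aeq[OF h] by simp
      also have "\<dots> \<le> real Mc * real (N h)"
        using key[OF HN KN hpow[OF h] assms(2) finM] unfolding e_def N_def Mc_def
        by (metis of_nat_le_iff of_nat_mult)
      finally show "Min A * real (c h) \<le> real Mc * real (N h)" .
    qed
    then show ?thesis by (simp add: sum_distrib_left)
  qed
  have s1: "d_ext G m H K \<le> Max A * d_comm G H K"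
    unfolding dext dcomm using upper Dpos by (simp add: divide_right_mono)
  have s2: "Min A * d_comm G H K / real Mc \<le> d_ext G m H K"
  proof (cases "Mc = 0")
    case True
    then show ?thesis unfolding dext using Dpos by (simp add: sum_nonneg)
  next
    case False
    then have Mp: "real Mc > 0" by simp
    have "Min A * d_comm G H K / real Mc = (Min A * (\<Sum>h\<in>H. real (c h))) / (real Mc * D)"
      unfolding dcomm D_def by simp
    also have "\<dots> \<le> (real Mc * (\<Sum>h\<in>H. real (N h))) / (real Mc * D)"
    proof (rule divide_right_mono)
      show "Min A * (\<Sum>h\<in>H. real (c h)) \<le> real Mc * (\<Sum>h\<in>H. real (N h))"
        using lower False by simp
      show "0 \<le> real Mc * D" using Mp Dpos D_def by simp
    qed
    also have "\<dots> = d_ext G m H K" unfolding dext D_def using Mp by simp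
    finally show ?thesis .
  qed
  show ?thesis using s1 s2 unfolding A_def Mc_def by simp
qed

end
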